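(* Assume conditions (i) and (ii) of the context. There exists a polynomial $h_1:\mathbb R^3\to\mathbb R$ such that for all $d\in\mathbb N$, every architecture $a$ with input dimension $d$, every $R\in(0,\infty)$, all $K,D\in[1,\infty)$ and every $\varepsilon\in(0,1)$ with $K\ge h_1(\varepsilon^{-1},d,D)$, it holds with $\mathcal H=\mathcal N_{a,R,D}$ that $$\sup_{f\in\mathcal H}\big|\mathcal E_d^{(K)}(f)-\mathcal E_d(f)\big|\le\varepsilon.$$
   Context: Fix $T\in(0,\infty)$ and reals $u<v$. For each $d\in\mathbb N$: $\mu_d:\mathbb R^d\to\mathbb R^d$, $\sigma_d:\mathbb R^d\to\mathbb R^{d\times d}$ Lipschitz, $\varphi_d:\mathbb R^d\to\mathbb R$ measurable; on a filtered probability space, $B$ a standard $d$-dimensional Brownian motion, $X_d$ uniform on $[u,v]^d$ and $\mathcal F_0$-measurable, $S_t=X_d+\int_0^t\mu_d(S_s)ds+\int_0^t\sigma_d(S_s)dB_s$, $Y_d=S_T=(Y_{d,1},\dots,Y_{d,d})$. Risk $\mathcal E_d(f)=\mathbb E[(f(X_d)-\varphi_d(Y_d))^2]$; truncation $\varphi_d^{(K)}(x)=\mathbf 1\{\|x\|_\infty\le K\}\varphi_d(x)$ and $\mathcal E_d^{(K)}(f)=\mathbb E[(f(X_d)-\varphi_d^{(K)}(Y_d))^2]$. Conditions: (i) there is $c_1\in(0,\infty)$ with $\mathbb P(|Y_{d,i}|\ge t)\le2\exp\{-c_1(\log t)^2\}$ for all $d$, $t\ge1$, $i\le d$; (ii)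 there are $c_2\in(0,\infty)$, $\lambda\in[2,\infty)$ with $|\varphi_d(y)|\le c_2(1+\|y\|_2^\lambda)$ for all $d$, $y\in\mathbb R^d$. ReLU networks: for $L\in\mathbb N$ and architecture $a=(N_0,N_1,\dots,N_L)$ with $N_0=d$, $N_L=1$, parameters $\theta=((A_1,b_1),\dots,(A_L,b_L))$, $A_l\in\mathbb R^{N_l\times N_{l-1}}$, $b_l\in\mathbb R^{N_l}$, realize $\Phi_\theta=W_L\circ\rho\circ W_{L-1}\circ\cdots\circ\rho\circ W_1$ with $W_l(x)=A_lx+b_l$ and $\rho$ the componentwise ReLU $\max\{\cdot,0\}$; $\|\theta\|_\infty$ is the maximal absolute entry; $P(a)=\sum_{l=1}^L N_l(N_{l-1}+1)$; $\mathcal N_{a,R}=\{\Phi_\theta|_{[u,v]^d}:\|\theta\|_\infty\le R\}$; $\mathrm{Clip}_D(x)=\min\{|x|,D\}\operatorname{sgn}(x)$; $\mathcal N_{a,R,D}=\{\mathrm{Clip}_D\circ\Phi:\Phi\in\mathcal N_{a,R}\}$. *)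

theory Defs
  imports "HOL-Probability.Probability"
begin

text \<open>Vectors in R^d are represented as functions nat => real; only indices i < d matter.\<close>

definition sup_norm :: "nat \<Rightarrow> (nat \<Rightarrow> real) \<Rightarrow> real" where
  "sup_norm d y = Max (insert 0 ((\<lambda>i. \<bar>y i\<bar>) ` {..<d}))"

definition l2_norm :: "nat \<Rightarrow> (nat \<Rightarrow> real) \<Rightarrow> real" where
  "l2_norm d y = sqrt (\<Sum>i<d. (y i)\<^sup>2)"

definition is_poly3 :: "(real \<Rightarrow> real \<Rightarrow> real \<Rightarrow> real) \<Rightarrow> bool" where
  "is_poly3 h \<longleftrightarrow> (\<exists>N (c :: nat \<Rightarrow> nat \<Rightarrow> nat \<Rightarrow> real).
      \<forall>x y z. h x y z = (\<Sum>i\<le>N. \<Sum>j\<le>N. \<Sum>k\<le>N. c i j k * x ^ i * y ^ j * z ^ k))"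

type_synonym layer = "(nat \<Rightarrow> nat \<Rightarrow> real) \<times> (nat \<Rightarrow> real)"

definition affine :: "nat \<Rightarrow> layer \<Rightarrow> (nat \<Rightarrow> real) \<Rightarrow> (nat \<Rightarrow> real)" where
  "affine n L x = (\<lambda>i. (\<Sum>j<n. fst L i j * x j) + snd L i)"

definition relu_vec :: "(nat \<Rightarrow> real) \<Rightarrow> (nat \<Rightarrow> real)" where
  "relu_vec x = (\<lambda>i. max (x i) 0)"

text \<open>realize [N0,...,NL] [(A1,b1),...,(AL,bL)] = W_L o rho o ... o rho o W_1\<close>
fun realize :: "nat list \<Rightarrow> layer list \<Rightarrow> (nat \<Rightarrow> real) \<Rightarrow> (nat \<Rightarrow> real)" where
  "realize (n # ns) [L] x = affine n L x"
| "realize (n # ns) (L # Ls) x = realize ns Ls (relu_vec (affine n L x))"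
| "realize _ _ x = x"

definition valid_arch :: "nat \<Rightarrow> nat list \<Rightarrow> bool" where
  "valid_arch d a \<longleftrightarrow> length a \<ge> 2 \<and> hd a = d \<and> last a = 1 \<and> (\<forall>n\<in>set a. n > 0)"

definition params_bounded :: "nat list \<Rightarrow> layer list \<Rightarrow> real \<Rightarrow> bool" where
  "params_bounded a \<theta> R \<longleftrightarrow> length \<theta> = length a - 1 \<and>
     (\<forall>l < length \<theta>. (\<forall>i < a ! (l+1). \<forall>j < a ! l. \<bar>fst (\<theta> ! l) i j\<bar> \<le> R)
                      \<and> (\<forall>i < a ! (l+1). \<bar>snd (\<theta> ! l) i\<bar> \<le> R))"

definition clip :: "real \<Rightarrow> real \<Rightarrow> real" where
  "clip D x = min \<bar>x\<bar> D * sgn x"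

text \<open>The class N_{a,R,D} (functions are only ever evaluated on [u,v]^d).\<close>
definition NN_clip :: "nat list \<Rightarrow> real \<Rightarrow> real \<Rightarrow> ((nat \<Rightarrow> real) \<Rightarrow> real) set" where
  "NN_clip a R D = {(\<lambda>x. clip D (realize a \<theta> x 0)) | \<theta>. params_bounded a \<theta> R}"

definition trunc :: "nat \<Rightarrow> real \<Rightarrow> ((nat \<Rightarrow> real) \<Rightarrow> real) \<Rightarrow> (nat \<Rightarrow> real) \<Rightarrow> real" where
  "trunc d K g y = (if sup_norm d y \<le> K then g y else 0)"

definition risk :: "'a measure \<Rightarrow> ('a \<Rightarrow> nat \<Rightarrow> real) \<Rightarrow> ('a \<Rightarrow> nat \<Rightarrow> real)
     \<Rightarrow> ((nat \<Rightarrow> real) \<Rightarrow> real) \<Rightarrow> ((nat \<Rightarrow> real) \<Rightarrow> real) \<Rightarrow> real" where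
  "risk M X Y g f = (LINT \<omega>|M. (f (X \<omega>) - g (Y \<omega>))\<^sup>2)"

end

theory Submission
  imports Defs
begin

definition momC :: "real \<Rightarrow> nat \<Rightarrow> real" where
  "momC c m = 1 + (\<Sum>n. (real n + 2) ^ m * (2 * exp (- c * (ln (real n + 1))\<^sup>2)))"

lemma mom_summable:
  assumes "c > 0"
  shows "summable (\<lambda>n. (real n + 2) ^ m * (2 * exp (- c * (ln (real n + 1))\<^sup>2)))"
proof (rule summable_comparison_test_ev)
  show "summable (\<lambda>n. 2 * 2 ^ m * inverse (real (Suc n) ^ 2))"
    using inverse_power_summable[of 2, where 'a=real]
    by (intro summable_mult) (subst summable_Suc_iff[where f="\<lambda>n. inverse (real n ^ 2)"], simp)
  obtain N :: nat where N: "exp ((real m + 2) / c) \<le> real N" using real_arch_simple by blast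
  show "\<forall>\<^sub>F n in sequentially. norm ((real n + 2) ^ m * (2 * exp (- c * (ln (real n + 1))\<^sup>2)))
          \<le> 2 * 2 ^ m * inverse (real (Suc n) ^ 2)"
  proof (rule eventually_sequentiallyI[of N])
    fix n assume "N \<le> n"
    define x where "x = real n + 1"
    have x1: "x \<ge> 1" unfolding x_def by simp
    have "exp ((real m + 2) / c) \<le> x" using N \<open>N \<le> n\<close> unfolding x_def by simp
    hence "(real m + 2) / c \<le> ln x" using x1 by (simp add: exp_le_cancel_iff ln_ge_iff)
    hence lx: "real m + 2 \<le> c * ln x" using assms by (simp add: field_simps)
    have lnx0: "ln x \<ge> 0" using x1 by simp
    have "exp (- c * (ln x)\<^sup>2) \<le> exp (- (real m + 2) * ln x)"
      using mult_right_mono[OF lx lnx0] by (simp add: power2_eq_square mult.assoc algebra_simps)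
    also have "\<dots> = inverse (x ^ (m + 2))"
    proof -
      have "exp (real (m + 2) * ln x) = x ^ (m + 2)"
        using x1 by (subst exp_of_nat_mult) simp
      moreover have "- (real m + 2) * ln x = - (real (m + 2) * ln x)" by (simp add: algebra_simps)
      ultimately show ?thesis by (simp only: exp_minus)
    qed
    finally have e: "exp (- c * (ln x)\<^sup>2) \<le> inverse (x ^ (m + 2))" .
    have "(real n + 2) ^ m \<le> (2 * x) ^ m" unfolding x_def by (intro power_mono) auto
    hence "(real n + 2) ^ m * (2 * exp (- c * (ln x)\<^sup>2)) \<le> (2 * x) ^ m * (2 * inverse (x ^ (m + 2)))"
      using e x1 by (intro mult_mono) auto
    also have "\<dots> = 2 * 2 ^ m * inverse (x ^ 2)"
      using x1 by (simp add: power_mult_distrib power_add field_simps power2_eq_square)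
    finally show "norm ((real n + 2) ^ m * (2 * exp (- c * (ln (real n + 1))\<^sup>2)))
          \<le> 2 * 2 ^ m * inverse (real (Suc n) ^ 2)" unfolding x_def by (simp add: add.commute)
  qed
qed

lemma moment_bound:
  assumes P: "prob_space M" and Zm[measurable]: "Z \<in> borel_measurable M" and c: "c > 0"
    and tail: "\<forall>t\<ge>1. measure M {\<omega>\<in>space M. \<bar>Z \<omega>\<bar> \<ge> t} \<le> 2 * exp (- c * (ln t)\<^sup>2)"
  shows "(\<integral>\<^sup>+\<omega>. ennreal (\<bar>Z \<omega>\<bar> ^ m) \<partial>M) \<le> ennreal (momC c m)"
proof -
  interpret prob_space M by (rule P)
  define a where "a n = (real n + 2) ^ m" for n :: nat
  define A where "A n = {\<omega>\<in>space M. real n + 1 \<le> \<bar>Z \<omega>\<bar>}" for n :: nat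
  have A[measurable]: "A n \<in> sets M" for n unfolding A_def by measurable
  have pw: "ennreal (\<bar>Z \<omega>\<bar> ^ m) \<le> 1 + (\<Sum>n. ennreal (a n) * indicator (A n) \<omega>)"
    if \<omega>: "\<omega> \<in> space M" for \<omega>
  proof (cases "\<bar>Z \<omega>\<bar> < 1")
    case True
    hence "\<bar>Z \<omega>\<bar> ^ m \<le> 1" by (intro power_le_one) auto
    hence "ennreal (\<bar>Z \<omega>\<bar> ^ m) \<le> 1" by (simp add: ennreal_le_1)
    also have "\<dots> \<le> 1 + (\<Sum>n. ennreal (a n) * indicator (A n) \<omega>)" by simp
    finally show ?thesis .
  next
    case False
    define k where "k = nat \<lfloor>\<bar>Z \<omega>\<bar>\<rfloor> - 1"
    have fl: "\<lfloor>\<bar>Z \<omega>\<bar>\<rfloor> \<ge> 1" using False by simp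
    have k1: "real k + 1 = real_of_int \<lfloor>\<bar>Z \<omega>\<bar>\<rfloor>" 
    proof -
      have "nat \<lfloor>\<bar>Z \<omega>\<bar>\<rfloor> \<ge> 1" using fl by linarith
      hence "real k + 1 = real (nat \<lfloor>\<bar>Z \<omega>\<bar>\<rfloor>)" unfolding k_def by (simp add: of_nat_diff)
      also have "\<dots> = real_of_int \<lfloor>\<bar>Z \<omega>\<bar>\<rfloor>" using fl by simp
      finally show ?thesis .
    qed
    have "real k + 1 \<le> \<bar>Z \<omega>\<bar>" using k1 by simp
    hence inA: "\<omega> \<in> A k" unfolding A_def using \<omega> by simp
    have "\<bar>Z \<omega>\<bar> < real k + 2" using k1 by linarith
    hence "\<bar>Z \<omega>\<bar> ^ m \<le> a k" unfolding a_def by (intro power_mono) auto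
    hence "ennreal (\<bar>Z \<omega>\<bar> ^ m) \<le> ennreal (a k) * indicator (A k) \<omega>"
      using inA by (simp add: ennreal_leI)
    also have "\<dots> \<le> (\<Sum>n. ennreal (a n) * indicator (A n) \<omega>)"
    proof -
      have "(\<Sum>n\<in>{k}. ennreal (a n) * indicator (A n) \<omega>) \<le> (\<Sum>n. ennreal (a n) * indicator (A n) \<omega>)"
        by (rule sum_le_suminf) (auto intro: summableI)
      thus ?thesis by (metis add.right_neutral empty_iff finite.emptyI sum.empty sum.insert)
    qed
    also have "\<dots> \<le> 1 + (\<Sum>n. ennreal (a n) * indicator (A n) \<omega>)" by simp
    finally show ?thesis .
  qed
  have "(\<integral>\<^sup>+\<omega>. ennreal (\<bar>Z \<omega>\<bar> ^ m) \<partial>M) \<le> (\<integral>\<^sup>+\<omega>. 1 + (\<Sum>n. ennreal (a n) * indicator (A n) \<omega>) \<partial>M)"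
    using pw by (intro nn_integral_mono) auto
  also have "\<dots> = 1 + (\<Sum>n. ennreal (a n) * emeasure M (A n))"
  proof -
    have m1: "(\<lambda>\<omega>. ennreal (a n) * indicator (A n) \<omega>) \<in> borel_measurable M" for n by measurable
    have "(\<integral>\<^sup>+\<omega>. 1 + (\<Sum>n. ennreal (a n) * indicator (A n) \<omega>) \<partial>M)
        = (\<integral>\<^sup>+\<omega>. 1 \<partial>M) + (\<integral>\<^sup>+\<omega>. (\<Sum>n. ennreal (a n) * indicator (A n) \<omega>) \<partial>M)"
      by (rule nn_integral_add) (use m1 in measurable)
    also have "(\<integral>\<^sup>+\<omega>. 1 \<partial>M) = 1" using emeasure_space_1 by simp
    also have "(\<integral>\<^sup>+\<omega>. (\<Sum>n. ennreal (a n) * indicator (A n) \<omega>) \<partial>M)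
        = (\<Sum>n. (\<integral>\<^sup>+\<omega>. ennreal (a n) * indicator (A n) \<omega> \<partial>M))"
      by (rule nn_integral_suminf) (rule m1)
    also have "\<dots> = (\<Sum>n. ennreal (a n) * emeasure M (A n))"
      by (intro suminf_cong nn_integral_cmult_indicator A)
    finally show ?thesis .
  qed
  finally have I1: "(\<integral>\<^sup>+\<omega>. ennreal (\<bar>Z \<omega>\<bar> ^ m) \<partial>M) \<le> 1 + (\<Sum>n. ennreal (a n) * emeasure M (A n))" .
  have I2: "(\<Sum>n. ennreal (a n) * emeasure M (A n)) \<le> (\<Sum>n. ennreal (a n * (2 * exp (- c * (ln (real n + 1))\<^sup>2))))"
  proof (intro suminf_le allI)
    fix n
    have "measure M (A n) \<le> 2 * exp (- c * (ln (real n + 1))\<^sup>2)"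
      using tail[rule_format, of "real n + 1"] unfolding A_def by simp
    thus "ennreal (a n) * emeasure M (A n) \<le> ennreal (a n * (2 * exp (- c * (ln (real n + 1))\<^sup>2)))"
      unfolding a_def by (simp add: emeasure_eq_measure ennreal_mult'[symmetric] ennreal_leI mult_left_mono)
  qed auto
  have I3: "(\<Sum>n. ennreal (a n * (2 * exp (- c * (ln (real n + 1))\<^sup>2)))) = ennreal (\<Sum>n. a n * (2 * exp (- c * (ln (real n + 1))\<^sup>2)))"
    using mom_summable[OF c, of m] unfolding a_def by (intro suminf_ennreal2) auto
  have "(\<integral>\<^sup>+\<omega>. ennreal (\<bar>Z \<omega>\<bar> ^ m) \<partial>M) \<le> 1 + ennreal (\<Sum>n. a n * (2 * exp (- c * (ln (real n + 1))\<^sup>2)))"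
  proof -
    have "1 + (\<Sum>n. ennreal (a n) * emeasure M (A n)) \<le> 1 + ennreal (\<Sum>n. a n * (2 * exp (- c * (ln (real n + 1))\<^sup>2)))"
      using I2 unfolding I3 by (rule add_left_mono)
    thus ?thesis using I1 by (rule order_trans[rotated])
  qed
  also have "\<dots> = ennreal (momC c m)"
  proof -
    have s0: "0 \<le> (\<Sum>n. a n * (2 * exp (- c * (ln (real n + 1))\<^sup>2)))"
      unfolding a_def by (rule suminf_nonneg[OF mom_summable[OF c, of m]]) simp
    have m: "momC c m = 1 + (\<Sum>n. a n * (2 * exp (- c * (ln (real n + 1))\<^sup>2)))"
      unfolding momC_def a_def ..
    show ?thesis unfolding m by (subst ennreal_plus[OF zero_le_one s0]) (simp only: ennreal_1)
  qed
  finally show ?thesis .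
qed


lemma realize_meas:
  "(\<And>j. (\<lambda>\<omega>. Z \<omega> j) \<in> borel_measurable M) \<Longrightarrow> (\<lambda>\<omega>. realize ns Ls (Z \<omega>) i) \<in> borel_measurable M"
proof (induction Ls arbitrary: ns Z i)
  case Nil
  then show ?case by (cases ns) auto
next
  case (Cons L Ls)
  show ?case
  proof (cases ns)
    case Nil
    then show ?thesis using Cons.prems by simp
  next
    case (Cons n ns')
    have aff: "(\<lambda>\<omega>. affine n L (Z \<omega>) k) \<in> borel_measurable M" for k
      unfolding affine_def using Cons.prems by measurable
    show ?thesis
    proof (cases Ls)
      case Nil
      then show ?thesis using aff \<open>ns = n # ns'\<close> by simp
    next
      case (Cons L' Ls')
      have "(\<lambda>\<omega>. realize ns' Ls (relu_vec (affine n L (Z \<omega>))) i) \<in> borel_measurable M"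
        by (rule Cons.IH) (unfold relu_vec_def, measurable, rule aff)
      then show ?thesis using \<open>ns = n # ns'\<close> Cons by simp
    qed
  qed
qed

lemma clip_bound: "D \<ge> 0 \<Longrightarrow> \<bar>clip D x\<bar> \<le> D"
  unfolding clip_def by (auto simp: abs_mult abs_sgn_eq)

lemma sup_norm_ge: "i < d \<Longrightarrow> \<bar>y i\<bar> \<le> sup_norm d y"
  unfolding sup_norm_def by (intro Max_ge) auto

lemma sup_norm_nonneg: "0 \<le> sup_norm d y"
  unfolding sup_norm_def by (intro Max_ge) auto

lemma sup_norm_cases: "sup_norm d y = 0 \<or> (\<exists>j<d. sup_norm d y = \<bar>y j\<bar>)"
proof -
  have "sup_norm d y \<in> insert 0 ((\<lambda>i. \<bar>y i\<bar>) ` {..<d})"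
    unfolding sup_norm_def by (intro Max_in) auto
  thus ?thesis by auto
qed

lemma sup_norm_le_iff: "0 \<le> K \<Longrightarrow> sup_norm d y \<le> K \<longleftrightarrow> (\<forall>i<d. \<bar>y i\<bar> \<le> K)"
  using sup_norm_ge[of _ d y] sup_norm_cases[of d y] by fastforce

lemma l2_sq_le: "(l2_norm d y)\<^sup>2 \<le> real d * (sup_norm d y)\<^sup>2"
proof -
  have "(l2_norm d y)\<^sup>2 = (\<Sum>i<d. (y i)\<^sup>2)"
    unfolding l2_norm_def by (simp add: sum_nonneg)
  also have "\<dots> \<le> (\<Sum>i<d. (sup_norm d y)\<^sup>2)"
  proof (intro sum_mono)
    fix i assume "i \<in> {..<d}"
    hence "\<bar>y i\<bar> \<le> sup_norm d y" by (intro sup_norm_ge) auto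
    thus "(y i)\<^sup>2 \<le> (sup_norm d y)\<^sup>2"
      by (metis abs_ge_zero power2_abs power_mono)
  qed
  finally show ?thesis by simp
qed

lemma sup_pow_le_sum:
  assumes "sup_norm d y > 0"
  shows "(sup_norm d y) ^ m \<le> (\<Sum>i<d. \<bar>y i\<bar> ^ m)"
proof -
  obtain j where j: "j < d" "sup_norm d y = \<bar>y j\<bar>" using sup_norm_cases[of d y] assms by auto
  have "(sup_norm d y) ^ m = (\<Sum>i\<in>{j}. \<bar>y i\<bar> ^ m)" using j by simp
  also have "\<dots> \<le> (\<Sum>i<d. \<bar>y i\<bar> ^ m)" using j by (intro sum_mono2) auto
  finally show ?thesis .
qed

lemma two_ab: "\<bar>2*a*b\<bar> \<le> a\<^sup>2 + b\<^sup>2" for a b :: real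
proof -
  have "0 \<le> (\<bar>a\<bar> - \<bar>b\<bar>)\<^sup>2" by simp
  thus ?thesis by (simp add: abs_mult power2_eq_square algebra_simps)
qed
lemma sq2: "(x - y)\<^sup>2 \<le> 2 * x\<^sup>2 + 2 * y\<^sup>2" for x y :: real
proof -
  have "0 \<le> (x + y)\<^sup>2" by simp
  thus ?thesis by (simp add: power2_eq_square algebra_simps)
qed
lemma sq_le: "\<bar>x\<bar> \<le> c \<Longrightarrow> x\<^sup>2 \<le> c\<^sup>2" for x c :: real
  by (metis abs_ge_zero power2_abs power_mono)

lemma phi_sq_bound:
  fixes c2 lam :: real and N d :: nat
  assumes c2: "c2 > 0" and lam: "lam \<ge> 2" and N: "real N \<ge> 2 * lam" and d: "d \<ge> 1"
    and ph: "\<bar>p\<bar> \<le> c2 * (1 + l2_norm d y powr lam)"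
  shows "p\<^sup>2 \<le> 4 * c2\<^sup>2 * real d ^ N * (max 1 (sup_norm d y)) ^ N"
proof -
  define s where "s = max 1 (sup_norm d y)"
  define l where "l = l2_norm d y"
  have s1: "s \<ge> 1" unfolding s_def by simp
  have d1: "real d \<ge> 1" using d by simp
  have l0: "l \<ge> 0" unfolding l_def l2_norm_def by (simp add: sum_nonneg)
  have sn0: "0 \<le> sup_norm d y" by (rule sup_norm_nonneg)
  have ss: "sup_norm d y \<le> s" unfolding s_def by simp
  have "l\<^sup>2 \<le> real d * (sup_norm d y)\<^sup>2" unfolding l_def by (rule l2_sq_le)
  also have "\<dots> \<le> real d * s\<^sup>2"
    using power_mono[OF ss sn0, of 2] d1 by (intro mult_left_mono) auto
  finally have ls: "l\<^sup>2 \<le> real d * s\<^sup>2" .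
  have e1: "(l powr lam)\<^sup>2 = (l\<^sup>2) powr lam"
    unfolding power2_eq_square by (rule powr_mult[symmetric])
  have e2: "(real d * s\<^sup>2) powr lam = real d powr lam * (s\<^sup>2) powr lam" by (rule powr_mult)
  have e3: "(s\<^sup>2) powr lam = s powr (2 * lam)"
    unfolding power2_eq_square powr_mult mult_2 powr_add ..
  have m1: "real d powr lam \<le> real d ^ N"
  proof -
    have "real d powr lam \<le> real d powr (real N)" using d1 N lam by (intro powr_mono) auto
    also have "\<dots> = real d ^ N" using d1 by (intro powr_realpow) auto
    finally show ?thesis .
  qed
  have m2: "(s\<^sup>2) powr lam \<le> s ^ N"
  proof -
    have "s powr (2 * lam) \<le> s powr (real N)" using s1 N by (intro powr_mono) auto
    also have "\<dots> = s ^ N" using s1 by (intro powr_realpow) auto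
    finally show ?thesis unfolding e3 .
  qed
  have "(l powr lam)\<^sup>2 = (l\<^sup>2) powr lam" by (rule e1)
  also have "\<dots> \<le> (real d * s\<^sup>2) powr lam"
    using ls lam l0 by (intro powr_mono2) auto
  also have "\<dots> = real d powr lam * (s\<^sup>2) powr lam" by (rule e2)
  also have "\<dots> \<le> real d ^ N * s ^ N"
    using m1 m2 by (intro mult_mono) auto
  finally have lb: "(l powr lam)\<^sup>2 \<le> real d ^ N * s ^ N" .
  have one: "1 \<le> real d ^ N * s ^ N"
    using one_le_power[OF d1, of N] one_le_power[OF s1, of N]
    by (metis mult_1_left mult_mono zero_le_one order_trans)
  have "p\<^sup>2 \<le> (c2 * (1 + l powr lam))\<^sup>2" using ph unfolding l_def
    by (intro sq_le)
  also have "\<dots> = c2\<^sup>2 * (1 + l powr lam)\<^sup>2" by (simp only: power_mult_distrib)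
  also have "\<dots> \<le> c2\<^sup>2 * (2 * (1 + (l powr lam)\<^sup>2))"
  proof (intro mult_left_mono)
    have "0 \<le> (1 - l powr lam)\<^sup>2" by simp
    thus "(1 + l powr lam)\<^sup>2 \<le> 2 * (1 + (l powr lam)\<^sup>2)" by (simp add: power2_eq_square algebra_simps)
  qed simp
  also have "\<dots> \<le> c2\<^sup>2 * (2 * (2 * (real d ^ N * s ^ N)))"
    using lb one by (intro mult_left_mono) auto
  finally show ?thesis unfolding s_def by simp
qed

lemma sum_if_out: "(\<Sum>k\<in>S. if P then f k else (0::real)) = (if P then \<Sum>k\<in>S. f k else 0)"
  by auto

lemma ite3: "(if i = a \<and> j = b \<and> k = c then A else (0::real)) * x^i*y^j*z^k
   = (if i = a then (if j = b then (if k = c then A*x^a*y^b*z^c else 0) else 0) else 0)"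
  by auto

lemma poly_witness:
  assumes "N \<ge> 1"
  shows "is_poly3 (\<lambda>x y z. A * x * y * z ^ 2 + B * x * y ^ (N + 1))"
  unfolding is_poly3_def
proof (intro exI allI)
  fix x y z :: real
  let ?c = "\<lambda>i j k. (if i = 1 \<and> j = 1 \<and> k = 2 then A else 0) + (if i = 1 \<and> j = N + 1 \<and> k = 0 then B else 0)"
  have "(\<Sum>i\<le>N+1. \<Sum>j\<le>N+1. \<Sum>k\<le>N+1. ?c i j k * x ^ i * y ^ j * z ^ k)
      = (\<Sum>i\<le>N+1. \<Sum>j\<le>N+1. \<Sum>k\<le>N+1. (if i = 1 \<and> j = 1 \<and> k = 2 then A else 0) * x ^ i * y ^ j * z ^ k)
      + (\<Sum>i\<le>N+1. \<Sum>j\<le>N+1. \<Sum>k\<le>N+1. (if i = 1 \<and> j = N + 1 \<and> k = 0 then B else 0) * x ^ i * y ^ j * z ^ k)"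
    by (simp only: sum.distrib[symmetric] distrib_right)
  also have "\<dots> = A * x * y * z ^ 2 + B * x * y ^ (N + 1)"
    unfolding ite3 sum_if_out sum.delta using assms by simp
  finally show "A * x * y * z ^ 2 + B * x * y ^ (N + 1) = (\<Sum>i\<le>N+1. \<Sum>j\<le>N+1. \<Sum>k\<le>N+1. ?c i j k * x ^ i * y ^ j * z ^ k)" by simp
qed


theorem proposition3p6:
  fixes u v c1 c2 lam :: real
    and M :: "nat \<Rightarrow> 'a measure"
    and X Y :: "nat \<Rightarrow> 'a \<Rightarrow> nat \<Rightarrow> real"
    and \<phi> :: "nat \<Rightarrow> (nat \<Rightarrow> real) \<Rightarrow> real"
  assumes "u < v"
    and "\<forall>d\<ge>1. prob_space (M d)"
    and "\<forall>d\<ge>1. X d \<in> M d \<rightarrow>\<^sub>M PiM {..<d} (\<lambda>_. lborel)"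
    and "\<forall>d\<ge>1. distr (M d) (PiM {..<d} (\<lambda>_. lborel)) (X d)
                = uniform_measure (PiM {..<d} (\<lambda>_. lborel)) (PiE {..<d} (\<lambda>_. {u..v}))"
    and "\<forall>d\<ge>1. Y d \<in> M d \<rightarrow>\<^sub>M PiM {..<d} (\<lambda>_. lborel)"
    and "\<forall>d\<ge>1. \<phi> d \<in> borel_measurable (PiM {..<d} (\<lambda>_. lborel))"
    and "c1 > 0"
    and cond_i: "\<forall>d\<ge>1. \<forall>t\<ge>1. \<forall>i<d.
           measure (M d) {\<omega> \<in> space (M d). \<bar>Y d \<omega> i\<bar> \<ge> t} \<le> 2 * exp (- c1 * (ln t)\<^sup>2)"
    and "c2 > 0" and "lam \<ge> 2"
    and cond_ii: "\<forall>d\<ge>1. \<forall>y \<in> PiE {..<d} (\<lambda>_. UNIV).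
           \<bar>\<phi> d y\<bar> \<le> c2 * (1 + l2_norm d y powr lam)"
  shows "\<exists>h1. is_poly3 h1 \<and>
     (\<forall>d\<ge>1. \<forall>a R K D \<epsilon>. valid_arch d a \<and> R > 0 \<and> K \<ge> 1 \<and> D \<ge> 1 \<and> 0 < \<epsilon> \<and> \<epsilon> < 1
        \<and> K \<ge> h1 (1 / \<epsilon>) (real d) D \<longrightarrow>
        (\<forall>f \<in> NN_clip a R D.
           \<bar>risk (M d) (X d) (Y d) (trunc d K (\<phi> d)) f - risk (M d) (X d) (Y d) (\<phi> d) f\<bar> \<le> \<epsilon>))"
proof -
  define N where "N = nat \<lceil>2 * lam\<rceil>"
  have N: "real N \<ge> 2 * lam" unfolding N_def by linarith
  have N1: "N \<ge> 1" using N assms(10) by simp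
  define C where "C = momC c1 (N + 1)"
  define h1 where "h1 = (\<lambda>x y z. C * x * y * z ^ 2 + (8 * c2\<^sup>2 * C) * x * y ^ (N + 1))"
  have C0: "C \<ge> 0"
  proof -
    have "0 \<le> (\<Sum>n. (real n + 2) ^ (N+1) * (2 * exp (- c1 * (ln (real n + 1))\<^sup>2)))"
      by (intro suminf_nonneg[OF mom_summable[OF assms(7), of "N+1"]]) auto
    thus ?thesis unfolding C_def momC_def by simp
  qed
  show ?thesis
  proof (intro exI conjI allI impI ballI)
    show "is_poly3 h1" unfolding h1_def by (rule poly_witness[OF N1])
  next
    fix d :: nat and a :: "nat list" and R K D \<epsilon> :: real and f :: "(nat \<Rightarrow> real) \<Rightarrow> real"
    assume d: "d \<ge> 1"
    assume H: "valid_arch d a \<and> R > 0 \<and> K \<ge> 1 \<and> D \<ge> 1 \<and> 0 < \<epsilon> \<and> \<epsilon> < 1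
        \<and> K \<ge> h1 (1 / \<epsilon>) (real d) D"
    assume "f \<in> NN_clip a R D"
    then obtain \<theta> where f: "f = (\<lambda>x. clip D (realize a \<theta> x 0))" unfolding NN_clip_def by auto
    from H have K1: "K \<ge> 1" and D1: "D \<ge> 1" and e0: "\<epsilon> > 0" and Kh: "K \<ge> h1 (1 / \<epsilon>) (real d) D" by auto
    interpret prob_space "M d" using assms(2) d by auto
    have Xm: "X d \<in> M d \<rightarrow>\<^sub>M PiM {..<d} (\<lambda>_. lborel)" using assms(3) d by auto
    have Ymeas: "Y d \<in> M d \<rightarrow>\<^sub>M PiM {..<d} (\<lambda>_. lborel)" using assms(5) d by auto
    have phim: "\<phi> d \<in> borel_measurable (PiM {..<d} (\<lambda>_. lborel))" using assms(6) d by auto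
    have Ym[measurable]: "(\<lambda>\<omega>. Y d \<omega> i) \<in> borel_measurable (M d)" if "i < d" for i
      using measurable_compose[OF Ymeas measurable_component_singleton[of i "{..<d}" "\<lambda>_. lborel"]] that by simp
    have Pm[measurable]: "(\<lambda>\<omega>. \<phi> d (Y d \<omega>)) \<in> borel_measurable (M d)"
      using measurable_compose[OF Ymeas phim] by (simp add: comp_def)
    have Xc: "(\<lambda>\<omega>. X d \<omega> j) \<in> borel_measurable (M d)" for j
    proof (cases "j < d")
      case True
      then show ?thesis
        using measurable_compose[OF Xm measurable_component_singleton[of j "{..<d}" "\<lambda>_. lborel"]] by simp
    next
      case False
      have "X d \<omega> j = undefined" if "\<omega> \<in> space (M d)" for \<omega>
        using measurable_space[OF Xm that] False by (auto simp: space_PiM PiE_def extensional_def)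
      hence "(\<lambda>\<omega>. X d \<omega> j) \<in> borel_measurable (M d) \<longleftrightarrow> (\<lambda>\<omega>. undefined :: real) \<in> borel_measurable (M d)"
        by (intro measurable_cong) auto
      thus ?thesis by simp
    qed
    have Rm: "(\<lambda>\<omega>. realize a \<theta> (X d \<omega>) 0) \<in> borel_measurable (M d)"
      by (rule realize_meas) (rule Xc)
    have Fm[measurable]: "(\<lambda>\<omega>. f (X d \<omega>)) \<in> borel_measurable (M d)"
      unfolding f clip_def using Rm by measurable
    have Fb: "\<bar>f x\<bar> \<le> D" for x unfolding f using D1 by (intro clip_bound) auto
    have Ypi: "Y d \<omega> \<in> PiE {..<d} (\<lambda>_. UNIV)" if "\<omega> \<in> space (M d)" for \<omega>
      using measurable_space[OF Ymeas that] by (simp add: space_PiM)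
    define G where "G \<omega> = (\<Sum>i<d. \<bar>Y d \<omega> i\<bar> ^ (N + 1))" for \<omega>
    have mom: "(\<integral>\<^sup>+\<omega>. ennreal (\<bar>Y d \<omega> i\<bar> ^ (N+1)) \<partial>M d) \<le> ennreal C" if "i < d" for i
      unfolding C_def
      by (rule moment_bound[OF prob_space_axioms Ym[OF that] assms(7)]) (use cond_i d that in auto)
    have intYi: "integrable (M d) (\<lambda>\<omega>. \<bar>Y d \<omega> i\<bar> ^ (N+1))" if "i < d" for i
    proof (rule integrableI_bounded)
      show "(\<lambda>\<omega>. \<bar>Y d \<omega> i\<bar> ^ (N+1)) \<in> borel_measurable (M d)" using that by measurable
      have "(\<integral>\<^sup>+\<omega>. ennreal (norm (\<bar>Y d \<omega> i\<bar> ^ (N+1))) \<partial>M d) = (\<integral>\<^sup>+\<omega>. ennreal (\<bar>Y d \<omega> i\<bar> ^ (N+1)) \<partial>M d)"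
        by (simp add: abs_mult power_abs)
      also have "\<dots> < \<infinity>" using mom[OF that] by (simp add: le_less_trans)
      finally show "(\<integral>\<^sup>+\<omega>. ennreal (norm (\<bar>Y d \<omega> i\<bar> ^ (N+1))) \<partial>M d) < \<infinity>" .
    qed
    have intYi_le: "(LINT \<omega>|M d. \<bar>Y d \<omega> i\<bar> ^ (N+1)) \<le> C" if "i < d" for i
    proof -
      have "ennreal (LINT \<omega>|M d. \<bar>Y d \<omega> i\<bar> ^ (N+1)) = (\<integral>\<^sup>+\<omega>. ennreal (\<bar>Y d \<omega> i\<bar> ^ (N+1)) \<partial>M d)"
        by (rule nn_integral_eq_integral[symmetric]) (use intYi[OF that] in auto)
      also have "\<dots> \<le> ennreal C" by (rule mom[OF that])
      finally show ?thesis using C0 by (simp add: ennreal_le_iff)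
    qed
    have intG: "integrable (M d) G" unfolding G_def by (rule Bochner_Integration.integrable_sum) (use intYi in auto)
    have Gle: "(LINT \<omega>|M d. G \<omega>) \<le> real d * C"
    proof -
      have "(LINT \<omega>|M d. G \<omega>) = (\<Sum>i<d. LINT \<omega>|M d. \<bar>Y d \<omega> i\<bar> ^ (N+1))"
        unfolding G_def by (rule Bochner_Integration.integral_sum) (use intYi in auto)
      also have "\<dots> \<le> (\<Sum>i<d. C)" by (intro sum_mono intYi_le) auto
      finally show ?thesis by simp
    qed
    have G0: "G \<omega> \<ge> 0" for \<omega> unfolding G_def by (intro sum_nonneg) auto
    define W where "W = D\<^sup>2 + 8 * c2\<^sup>2 * real d ^ N"
    define S where "S \<omega> = sup_norm d (Y d \<omega>)" for \<omega>
    define p where "p \<omega> = \<phi> d (Y d \<omega>)" for \<omega>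
    define F where "F \<omega> = f (X d \<omega>)" for \<omega>
    have psq: "(p \<omega>)\<^sup>2 \<le> 4 * c2\<^sup>2 * real d ^ N * (max 1 (S \<omega>)) ^ N" if "\<omega> \<in> space (M d)" for \<omega>
      unfolding p_def S_def
      by (rule phi_sq_bound[OF assms(9) assms(10) N d]) (use cond_ii d Ypi[OF that] in auto)
    have sG: "(max 1 (S \<omega>)) ^ N \<le> 1 + G \<omega>" for \<omega>
    proof (cases "S \<omega> \<le> 1")
      case True thus ?thesis using G0[of \<omega>] by simp
    next
      case False
      hence "(max 1 (S \<omega>)) ^ N \<le> S \<omega> ^ (N+1)" by (simp add: power_increasing)
      also have "\<dots> \<le> G \<omega>" unfolding S_def G_def using False by (intro sup_pow_le_sum) (simp add: S_def)
      finally show ?thesis by simp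
    qed
    have trunc_eq: "trunc d K (\<phi> d) (Y d \<omega>) = (if \<forall>i<d. \<bar>Y d \<omega> i\<bar> \<le> K then p \<omega> else 0)" for \<omega>
      unfolding trunc_def p_def using sup_norm_le_iff[of K d "Y d \<omega>"] K1 by simp
    define A where "A \<omega> = (F \<omega> - (if \<forall>i<d. \<bar>Y d \<omega> i\<bar> \<le> K then p \<omega> else 0))\<^sup>2" for \<omega>
    define B where "B \<omega> = (F \<omega> - p \<omega>)\<^sup>2" for \<omega>
    have rA: "risk (M d) (X d) (Y d) (trunc d K (\<phi> d)) f = (LINT \<omega>|M d. A \<omega>)"
      unfolding risk_def A_def F_def trunc_eq ..
    have rB: "risk (M d) (X d) (Y d) (\<phi> d) f = (LINT \<omega>|M d. B \<omega>)"
      unfolding risk_def B_def F_def p_def ..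
    have Am[measurable]: "A \<in> borel_measurable (M d)" unfolding A_def F_def p_def by measurable
    have Bm[measurable]: "B \<in> borel_measurable (M d)" unfolding B_def F_def p_def by measurable
    define U where "U \<omega> = 2 * D\<^sup>2 + 8 * c2\<^sup>2 * real d ^ N * (1 + G \<omega>)" for \<omega>
    have intU: "integrable (M d) U" unfolding U_def
      by (intro Bochner_Integration.integrable_add integrable_mult_right integrable_const intG)
    have U0: "U \<omega> \<ge> 0" for \<omega> unfolding U_def using G0[of \<omega>] by simp
    have Fsq: "(F \<omega>)\<^sup>2 \<le> D\<^sup>2" for \<omega>
      unfolding F_def using Fb by (intro sq_le)
    have pU: "(p \<omega>)\<^sup>2 \<le> 4 * c2\<^sup>2 * real d ^ N * (1 + G \<omega>)" if "\<omega> \<in> space (M d)" for \<omega>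
      using psq[OF that] by (rule order_trans) (intro mult_left_mono sG; simp)
    have AU: "\<bar>A \<omega>\<bar> \<le> U \<omega>" if "\<omega> \<in> space (M d)" for \<omega>
    proof -
      have "A \<omega> \<le> 2 * (F \<omega>)\<^sup>2 + 2 * (if \<forall>i<d. \<bar>Y d \<omega> i\<bar> \<le> K then p \<omega> else 0)\<^sup>2"
        unfolding A_def by (rule sq2)
      also have "\<dots> \<le> U \<omega>"
      proof -
        have "(if \<forall>i<d. \<bar>Y d \<omega> i\<bar> \<le> K then p \<omega> else 0)\<^sup>2 \<le> (p \<omega>)\<^sup>2" by simp
        thus ?thesis unfolding U_def using Fsq[of \<omega>] pU[OF that] by linarith
      qed
      finally show ?thesis unfolding A_def by simp
    qed
    have BU: "\<bar>B \<omega>\<bar> \<le> U \<omega>" if "\<omega> \<in> space (M d)" for \<omega>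
    proof -
      have "B \<omega> \<le> 2 * (F \<omega>)\<^sup>2 + 2 * (p \<omega>)\<^sup>2" unfolding B_def by (rule sq2)
      also have "\<dots> \<le> U \<omega>" unfolding U_def using Fsq[of \<omega>] pU[OF that] by linarith
      finally show ?thesis unfolding B_def by simp
    qed
    have intA: "integrable (M d) A"
    proof (rule Bochner_Integration.integrable_bound[OF intU Am])
      show "AE \<omega> in M d. norm (A \<omega>) \<le> norm (U \<omega>)"
        by (rule AE_I2) (use AU U0 in simp)
    qed
    have intB: "integrable (M d) B"
    proof (rule Bochner_Integration.integrable_bound[OF intU Bm])
      show "AE \<omega> in M d. norm (B \<omega>) \<le> norm (U \<omega>)"
        by (rule AE_I2) (use BU U0 in simp)
    qed
    have diff: "\<bar>A \<omega> - B \<omega>\<bar> \<le> W / K * G \<omega>" if "\<omega> \<in> space (M d)" for \<omega>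
    proof (cases "\<forall>i<d. \<bar>Y d \<omega> i\<bar> \<le> K")
      case True
      then show ?thesis unfolding A_def B_def W_def using G0[of \<omega>] K1 by simp
    next
      case False
      then obtain i where i: "i < d" "\<bar>Y d \<omega> i\<bar> > K" by auto
      have SK: "S \<omega> > K" unfolding S_def using sup_norm_ge[OF i(1), of "Y d \<omega>"] i by simp
      have AB: "A \<omega> - B \<omega> = 2 * F \<omega> * p \<omega> - (p \<omega>)\<^sup>2"
        unfolding A_def B_def if_not_P[OF False] by (simp add: power2_eq_square algebra_simps)
      have "\<bar>2 * F \<omega> * p \<omega>\<bar> \<le> (F \<omega>)\<^sup>2 + (p \<omega>)\<^sup>2"
        by (rule two_ab)
      moreover have "\<bar>2 * F \<omega> * p \<omega> - (p \<omega>)\<^sup>2\<bar> \<le> \<bar>2 * F \<omega> * p \<omega>\<bar> + \<bar>(p \<omega>)\<^sup>2\<bar>"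
        by (rule abs_triangle_ineq4)
      moreover have "\<bar>(p \<omega>)\<^sup>2\<bar> = (p \<omega>)\<^sup>2" by simp
      ultimately have "\<bar>A \<omega> - B \<omega>\<bar> \<le> D\<^sup>2 + 2 * (p \<omega>)\<^sup>2" unfolding AB using Fsq[of \<omega>] by linarith
      also have "\<dots> \<le> D\<^sup>2 + 8 * c2\<^sup>2 * real d ^ N * S \<omega> ^ N"
      proof -
        have mx: "max 1 (S \<omega>) = S \<omega>" using SK K1 by simp
        have "(p \<omega>)\<^sup>2 \<le> 4 * c2\<^sup>2 * real d ^ N * S \<omega> ^ N" using psq[OF that] unfolding mx .
        thus ?thesis by linarith
      qed
      also have "\<dots> \<le> W * S \<omega> ^ N" unfolding W_def
      proof -
        have "1 \<le> S \<omega> ^ N" using SK K1 by (simp add: one_le_power)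
        hence "D\<^sup>2 \<le> D\<^sup>2 * S \<omega> ^ N" by (simp add: mult_le_cancel_left1)
        thus "D\<^sup>2 + 8 * c2\<^sup>2 * real d ^ N * S \<omega> ^ N \<le> (D\<^sup>2 + 8 * c2\<^sup>2 * real d ^ N) * S \<omega> ^ N"
          by (simp add: distrib_right)
      qed
      also have "\<dots> \<le> W * (S \<omega> ^ (N+1) / K)"
      proof (intro mult_left_mono)
        have "S \<omega> ^ N * K \<le> S \<omega> ^ N * S \<omega>" using SK K1 by (intro mult_left_mono) auto
        thus "S \<omega> ^ N \<le> S \<omega> ^ (N+1) / K" using K1 by (simp add: field_simps)
        show "0 \<le> W" unfolding W_def by simp
      qed
      also have "\<dots> \<le> W * (G \<omega> / K)"
      proof (intro mult_left_mono divide_right_mono)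
        show "S \<omega> ^ (N+1) \<le> G \<omega>" unfolding S_def G_def using SK K1
          by (intro sup_pow_le_sum) (simp add: S_def)
      qed (use K1 W_def in auto)
      finally show ?thesis by simp
    qed
    have "\<bar>(LINT \<omega>|M d. A \<omega>) - (LINT \<omega>|M d. B \<omega>)\<bar> = \<bar>LINT \<omega>|M d. A \<omega> - B \<omega>\<bar>"
      using intA intB by simp
    also have "\<dots> \<le> (LINT \<omega>|M d. \<bar>A \<omega> - B \<omega>\<bar>)"
      using integral_norm_bound[of "M d" "\<lambda>\<omega>. A \<omega> - B \<omega>"] by (simp only: real_norm_def)
    also have "\<dots> \<le> (LINT \<omega>|M d. W / K * G \<omega>)"
      by (rule integral_mono_AE) (use intA intB intG diff in auto)
    also have "\<dots> = W / K * (LINT \<omega>|M d. G \<omega>)" by simp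
    also have "\<dots> \<le> W / K * (real d * C)"
      using Gle K1 by (intro mult_left_mono) (auto simp: W_def)
    also have "\<dots> \<le> \<epsilon>"
    proof -
      have "h1 (1 / \<epsilon>) (real d) D = W * real d * C / \<epsilon>"
        unfolding h1_def W_def by (simp add: field_simps power_add add_divide_distrib)
      hence "W * real d * C / \<epsilon> \<le> K" using Kh by simp
      hence "W * real d * C \<le> K * \<epsilon>" using e0 by (simp add: field_simps)
      thus ?thesis using K1 by (simp add: field_simps)
    qed
    finally show "\<bar>risk (M d) (X d) (Y d) (trunc d K (\<phi> d)) f - risk (M d) (X d) (Y d) (\<phi> d) f\<bar> \<le> \<epsilon>"
      unfolding rA rB .
  qed
qed

end
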